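(* In the setting below, suppose $u(s,t,q)=l(s,q)U(t)$, $v(s,t,q)=m(s,q)V(t)$, $w(s,t,q)=n(s,q)W(t)$, $x(s,t,q)=p(s,q)X(t)$ with all factors of class $C^1$, and assume $U(t_0)=U'(t_0)=V(t_0)=V'(t_0)=0$. Then $\mathbf r$ is an isogeodesic of $\mathbf P$ at $(t_0,q_0)$ if and only if for all $s\in[L_1,L_2]$: $$n(s,q_0)W(t_0)=0,\qquad p(s,q_0)X(t_0)=0,$$ $$n(s,q_0)\,W'(t_0)\,\frac{\partial p}{\partial q}(s,q_0)\,X(t_0)-\frac{\partial n}{\partial q}(s,q_0)\,W(t_0)\,p(s,q_0)\,X'(t_0)\neq0.$$
   Context: $\mathbf r:[L_1,L_2]\to\mathbb R^4$ is an arc-length curve with Frenet frame $\{\mathbf T,\mathbf N,\mathbf B_1,\mathbf B_2\}$ (orthonormal, $\mathbf T=\mathbf r'$, $\mathbf T'=k_1\mathbf N$, $\mathbf N'=-k_1\mathbf T+k_2\mathbf B_1$, $\mathbf B_1'=-k_2\mathbf N+k_3\mathbf B_2$, $\mathbf B_2'=-k_3\mathbf B_1$, $k_1>0$), and $\mathbf P(s,t,q)=\mathbf r(s)+u\mathbf T(s)+v\mathbf N(s)+w\mathbf B_1(s)+x\mathbf B_2(s)$ on $[L_1,L_2]\times[T_1,T_2]\times[Q_1,Q_2]$, with $t_0\in[T_1,T_2]$, $q_0\in[Q_1,Q_2]$ fixed. "$\mathbf r$ is an isogeodesic of $\mathbf P$ at $(t_0,q_0)$" means: $\mathbf P(s,t_0,q_0)=\mathbf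 r(s)$ for all $s$, $\partial_s\mathbf P,\partial_t\mathbf P,\partial_q\mathbf P$ are linearly independent at $(s,t_0,q_0)$, and $\mathbf N(s)$ is parallel to the normal $\partial_s\mathbf P\otimes\partial_t\mathbf P\otimes\partial_q\mathbf P$ (four-dimensional vector product) at $(s,t_0,q_0)$, for all $s$. *)

theory Defs
  imports "HOL-Analysis.Analysis"
begin

definition C1_on :: "'a::real_normed_vector set \<Rightarrow> ('a \<Rightarrow> 'b::real_normed_vector) \<Rightarrow> bool" where
  "C1_on S f \<longleftrightarrow> (\<exists>f'. continuous_on S f' \<and>
      (\<forall>z\<in>S. (f has_derivative blinfun_apply (f' z)) (at z within S)))"

text \<open>Four-dimensional vector product a (x) b (x) c: the formal determinant with
  rows e_1..e_4 (first row), a, b, c; its i-th component is the determinant with first row e_i.\<close>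
definition cross4 :: "real^4 \<Rightarrow> real^4 \<Rightarrow> real^4 \<Rightarrow> real^4" where
  "cross4 a b c = (\<chi> i. det ((\<chi> j. if j = 1 then axis i 1 else if j = 2 then a
                                   else if j = 3 then b else c) :: real^4^4))"

definition lin_indep3 :: "'a::real_vector \<Rightarrow> 'a \<Rightarrow> 'a \<Rightarrow> bool" where
  "lin_indep3 a b c \<longleftrightarrow> (\<forall>\<alpha> \<beta> \<gamma>::real. \<alpha> *\<^sub>R a + \<beta> *\<^sub>R b + \<gamma> *\<^sub>R c = 0 \<longrightarrow> \<alpha> = 0 \<and> \<beta> = 0 \<and> \<gamma> = 0)"

definition parallel :: "'a::real_vector \<Rightarrow> 'a \<Rightarrow> bool" where
  "parallel a b \<longleftrightarrow> (\<exists>c::real. a = c *\<^sub>R b \<or> b = c *\<^sub>R a)"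

definition frenet4 ::
  "real \<Rightarrow> real \<Rightarrow> (real \<Rightarrow> real^4) \<Rightarrow> (real \<Rightarrow> real^4) \<Rightarrow> (real \<Rightarrow> real^4) \<Rightarrow>
   (real \<Rightarrow> real^4) \<Rightarrow> (real \<Rightarrow> real^4) \<Rightarrow> (real \<Rightarrow> real) \<Rightarrow> (real \<Rightarrow> real) \<Rightarrow> (real \<Rightarrow> real) \<Rightarrow> bool"
  where
  "frenet4 L1 L2 r T N B1 B2 k1 k2 k3 \<longleftrightarrow>
     (\<forall>s\<in>{L1..L2}.
        T s \<bullet> T s = 1 \<and> N s \<bullet> N s = 1 \<and> B1 s \<bullet> B1 s = 1 \<and> B2 s \<bullet> B2 s = 1 \<and>
        T s \<bullet> N s = 0 \<and> T s \<bullet> B1 s = 0 \<and> T s \<bullet> B2 s = 0 \<and>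
        N s \<bullet> B1 s = 0 \<and> N s \<bullet> B2 s = 0 \<and> B1 s \<bullet> B2 s = 0 \<and>
        (r has_vector_derivative T s) (at s within {L1..L2}) \<and>
        (T has_vector_derivative (k1 s *\<^sub>R N s)) (at s within {L1..L2}) \<and>
        (N has_vector_derivative (- k1 s *\<^sub>R T s + k2 s *\<^sub>R B1 s)) (at s within {L1..L2}) \<and>
        (B1 has_vector_derivative (- k2 s *\<^sub>R N s + k3 s *\<^sub>R B2 s)) (at s within {L1..L2}) \<and>
        (B2 has_vector_derivative (- k3 s *\<^sub>R B1 s)) (at s within {L1..L2}) \<and>
        k1 s > 0)"

definition isogeodesic ::
  "real \<Rightarrow> real \<Rightarrow> real \<Rightarrow> real \<Rightarrow> real \<Rightarrow> real \<Rightarrow> (real \<Rightarrow> real^4) \<Rightarrow> (real \<Rightarrow> real^4) \<Rightarrow>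
   (real \<Rightarrow> real \<Rightarrow> real \<Rightarrow> real^4) \<Rightarrow> real \<Rightarrow> real \<Rightarrow> bool" where
  "isogeodesic L1 L2 T1 T2 Q1 Q2 r N P t0 q0 \<longleftrightarrow>
     (\<forall>s\<in>{L1..L2}.
        P s t0 q0 = r s \<and>
        (let Ps = vector_derivative (\<lambda>\<sigma>. P \<sigma> t0 q0) (at s within {L1..L2});
             Pt = vector_derivative (\<lambda>\<tau>. P s \<tau> q0) (at t0 within {T1..T2});
             Pq = vector_derivative (\<lambda>\<rho>. P s t0 \<rho>) (at q0 within {Q1..Q2})
         in lin_indep3 Ps Pt Pq \<and> parallel (N s) (cross4 Ps Pt Pq)))"

end

theory Submission imports Defs begin
definition M4 :: "real^4 \<Rightarrow> real^4 \<Rightarrow> real^4 \<Rightarrow> real^4 \<Rightarrow> real^4^4" where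
 "M4 v a b c = (\<chi> j. if j = 1 then v else if j = 2 then a else if j = 3 then b else c)"

lemma cross4_inner: "cross4 a b c \<bullet> v = det (M4 v a b c)"
proof -
  let ?R = "\<lambda>j::4. if j = 2 then a else if j = 3 then b else c"
  have "cross4 a b c \<bullet> v = (\<Sum>i\<in>UNIV. v$i * det ((\<chi> j. if j = 1 then axis i 1 else ?R j) :: real^4^4))"
    unfolding cross4_def inner_vec_def by (simp add: mult.commute)
  also have "\<dots> = (\<Sum>i\<in>UNIV. det ((\<chi> j. if j = 1 then v$i *s axis i 1 else ?R j) :: real^4^4))"
    by (subst det_row_mul) simp
  also have "\<dots> = det ((\<chi> j. if j = 1 then (\<Sum>i\<in>UNIV. v$i *s axis i 1) else ?R j) :: real^4^4)"
    by (subst det_linear_row_sum) simp_all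
  also have "\<dots> = det (M4 v a b c)" unfolding basis_expansion M4_def by simp
  finally show ?thesis .
qed

lemma cross4_orth1: "cross4 a b c \<bullet> a = 0"
  unfolding cross4_inner M4_def
  by (rule det_identical_rows[of 1 2]) (simp_all add: row_def)
lemma cross4_orth2: "cross4 a b c \<bullet> b = 0"
  unfolding cross4_inner M4_def
  by (rule det_identical_rows[of 1 3]) (simp_all add: row_def)
lemma cross4_orth3: "cross4 a b c \<bullet> c = 0"
  unfolding cross4_inner M4_def
  by (rule det_identical_rows[of 1 4]) (simp_all add: row_def)

lemma orth_expand:
  fixes T N B1 B2 v :: "real^4"
  assumes "T \<bullet> T = 1" "N \<bullet> N = 1" "B1 \<bullet> B1 = 1" "B2 \<bullet> B2 = 1"
    "T \<bullet> N = 0" "T \<bullet> B1 = 0" "T \<bullet> B2 = 0" "N \<bullet> B1 = 0" "N \<bullet> B2 = 0" "B1 \<bullet> B2 = 0"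
    "v \<bullet> T = 0" "v \<bullet> B1 = 0" "v \<bullet> B2 = 0"
  shows "v = (v \<bullet> N) *\<^sub>R N"
proof (rule ccontr)
  define w where "w = v - (v \<bullet> N) *\<^sub>R N"
  assume "v \<noteq> (v \<bullet> N) *\<^sub>R N"
  hence w0: "w \<noteq> 0" unfolding w_def by simp
  have wT: "w \<bullet> T = 0" "w \<bullet> N = 0" "w \<bullet> B1 = 0" "w \<bullet> B2 = 0"
    using assms unfolding w_def by (simp_all add: inner_diff_left inner_diff_right inner_commute)
  have ww: "w \<bullet> w \<noteq> 0" using w0 by simp
  let ?S = "{T, N, B1, B2, w}"
  have d: "T \<noteq> N" "T \<noteq> B1" "T \<noteq> B2" "T \<noteq> w" "N \<noteq> B1" "N \<noteq> B2" "N \<noteq> w"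
     "B1 \<noteq> B2" "B1 \<noteq> w" "B2 \<noteq> w"
    using assms wT ww by (metis inner_commute zero_neq_one)+
  have "pairwise orthogonal ?S"
    using assms wT unfolding pairwise_def orthogonal_def by (auto simp: inner_commute)
  moreover have "0 \<notin> ?S" using assms w0 by auto
  ultimately have "independent ?S" by (rule pairwise_orthogonal_independent)
  hence "card ?S \<le> DIM(real^4)" using independent_bound by blast
  moreover have "card ?S = 5" using d by simp
  ultimately show False by simp
qed

lemma hvd_lin1:
  fixes f :: "real \<Rightarrow> real" and v :: "'a::real_normed_vector"
  assumes "(f has_vector_derivative f') F"
  shows "((\<lambda>x. (c * f x) *\<^sub>R v) has_vector_derivative ((c * f') *\<^sub>R v)) F"
  using bounded_linear.has_vector_derivative[OF bounded_linear_scaleR_left[of "c *\<^sub>R v"] assms]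
  by (simp add: mult.commute)

lemma hvd_lin2:
  fixes f :: "real \<Rightarrow> real" and v :: "'a::real_normed_vector"
  assumes "(f has_vector_derivative f') F"
  shows "((\<lambda>x. (f x * c) *\<^sub>R v) has_vector_derivative ((f' * c) *\<^sub>R v)) F"
  using hvd_lin1[OF assms, of c v] by (simp add: mult.commute)

lemma C1_vd:
  assumes "C1_on {a..b} U" "t \<in> {a..b}"
  shows "(U has_vector_derivative vector_derivative U (at t within {a..b})) (at t within {a..b})"
proof -
  from assms obtain f' where "\<forall>z\<in>{a..b}. (U has_derivative blinfun_apply (f' z)) (at z within {a..b})"
    unfolding C1_on_def by blast
  hence "U differentiable (at t within {a..b})" using assms(2) by (auto intro: differentiableI)
  thus ?thesis using vector_derivative_works by blast
qed

lemma C1_partial: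
  assumes "C1_on (A \<times> B) (\<lambda>(s, q). n s q)" "s \<in> A" "q \<in> B"
  shows "((\<lambda>q. n s q) has_vector_derivative vector_derivative (\<lambda>q. n s q) (at q within B)) (at q within B)"
proof -
  from assms obtain f' where "\<forall>z\<in>A \<times> B. ((\<lambda>(s, q). n s q) has_derivative blinfun_apply (f' z)) (at z within A \<times> B)"
    unfolding C1_on_def by blast
  hence d1: "(\<lambda>(s, q). n s q) differentiable (at (s, q) within A \<times> B)" using assms(2,3) by (auto intro: differentiableI)
  have "(\<lambda>q. (s, q)) ` B \<subseteq> A \<times> B" using assms(2) by auto
  hence d2: "(\<lambda>(s, q). n s q) differentiable (at ((\<lambda>q. (s, q)) q) within (\<lambda>q. (s, q)) ` B)"
    using differentiable_within_subset[OF d1] by simp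
  have d3: "(\<lambda>q. (s, q)) differentiable (at q within B)"
    by (rule differentiableI, rule has_derivative_Pair[OF has_derivative_const has_derivative_ident])
  have "((\<lambda>(s, q). n s q) \<circ> (\<lambda>q. (s, q))) differentiable (at q within B)"
    by (rule differentiable_chain_within[OF d3 d2])
  hence "(\<lambda>q. n s q) differentiable (at q within B)" by (simp add: o_def)
  thus ?thesis using vector_derivative_works by blast
qed

lemma dep3:
  fixes u v x :: "'a::real_vector"
  assumes "a * d - b * c = 0"
  shows "\<not> lin_indep3 x (a *\<^sub>R u + b *\<^sub>R v) (c *\<^sub>R u + d *\<^sub>R v)"
proof
  assume L: "lin_indep3 x (a *\<^sub>R u + b *\<^sub>R v) (c *\<^sub>R u + d *\<^sub>R v)"
  have e: "\<And>\<beta> \<gamma>. \<beta> * a + \<gamma> * c = 0 \<Longrightarrow> \<beta> * b + \<gamma> * d = 0 \<Longrightarrow> \<beta> = 0 \<and> \<gamma> = 0"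
  proof -
    fix \<beta> \<gamma> assume h: "\<beta> * a + \<gamma> * c = 0" "\<beta> * b + \<gamma> * d = 0"
    have "0 *\<^sub>R x + \<beta> *\<^sub>R (a *\<^sub>R u + b *\<^sub>R v) + \<gamma> *\<^sub>R (c *\<^sub>R u + d *\<^sub>R v)
          = (\<beta> * a + \<gamma> * c) *\<^sub>R u + (\<beta> * b + \<gamma> * d) *\<^sub>R v"
      by (simp add: algebra_simps)
    also have "\<dots> = 0" using h by simp
    finally show "\<beta> = 0 \<and> \<gamma> = 0" using L unfolding lin_indep3_def by blast
  qed
  have "d = 0 \<and> b = 0" using e[of d "-b"] assms by (simp add: algebra_simps)
  moreover have "c = 0 \<and> a = 0" using e[of c "-a"] assms by (simp add: algebra_simps)
  ultimately show False using e[of 1 0] by simp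
qed

lemma indep3:
  fixes T B1 B2 :: "real^4"
  assumes "T \<bullet> T = 1" "B1 \<bullet> B1 = 1" "B2 \<bullet> B2 = 1"
    "T \<bullet> B1 = 0" "T \<bullet> B2 = 0" "B1 \<bullet> B2 = 0" "a * d - b * c \<noteq> 0"
  shows "lin_indep3 T (a *\<^sub>R B1 + b *\<^sub>R B2) (c *\<^sub>R B1 + d *\<^sub>R B2)"
  unfolding lin_indep3_def
proof (intro allI impI)
  fix \<alpha> \<beta> \<gamma> :: real
  assume h: "\<alpha> *\<^sub>R T + \<beta> *\<^sub>R (a *\<^sub>R B1 + b *\<^sub>R B2) + \<gamma> *\<^sub>R (c *\<^sub>R B1 + d *\<^sub>R B2) = 0"
  have "T \<bullet> (\<alpha> *\<^sub>R T + \<beta> *\<^sub>R (a *\<^sub>R B1 + b *\<^sub>R B2) + \<gamma> *\<^sub>R (c *\<^sub>R B1 + d *\<^sub>R B2)) = 0"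
    using h by simp
  hence 1: "\<alpha> = 0" using assms by (simp add: inner_add_right)
  have "B1 \<bullet> (\<alpha> *\<^sub>R T + \<beta> *\<^sub>R (a *\<^sub>R B1 + b *\<^sub>R B2) + \<gamma> *\<^sub>R (c *\<^sub>R B1 + d *\<^sub>R B2)) = 0"
    using h by simp
  hence 2: "\<beta> * a + \<gamma> * c = 0" using assms by (simp add: inner_add_right inner_commute)
  have "B2 \<bullet> (\<alpha> *\<^sub>R T + \<beta> *\<^sub>R (a *\<^sub>R B1 + b *\<^sub>R B2) + \<gamma> *\<^sub>R (c *\<^sub>R B1 + d *\<^sub>R B2)) = 0"
    using h by simp
  hence 3: "\<beta> * b + \<gamma> * d = 0" using assms by (simp add: inner_add_right inner_commute)
  have "\<beta> * (a * d - b * c) = d * (\<beta> * a + \<gamma> * c) - c * (\<beta> * b + \<gamma> * d)" by (simp add: algebra_simps)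
  hence "\<beta> = 0" using 2 3 assms(7) by simp
  moreover have "\<gamma> * (a * d - b * c) = a * (\<beta> * b + \<gamma> * d) - b * (\<beta> * a + \<gamma> * c)" by (simp add: algebra_simps)
  hence "\<gamma> = 0" using 2 3 assms(7) by simp
  ultimately show "\<alpha> = 0 \<and> \<beta> = 0 \<and> \<gamma> = 0" using 1 by simp
qed

lemma par3:
  fixes T N B1 B2 :: "real^4"
  assumes "T \<bullet> T = 1" "N \<bullet> N = 1" "B1 \<bullet> B1 = 1" "B2 \<bullet> B2 = 1"
    "T \<bullet> N = 0" "T \<bullet> B1 = 0" "T \<bullet> B2 = 0" "N \<bullet> B1 = 0" "N \<bullet> B2 = 0" "B1 \<bullet> B2 = 0"
    "a * d - b * c \<noteq> 0"
  shows "parallel N (cross4 T (a *\<^sub>R B1 + b *\<^sub>R B2) (c *\<^sub>R B1 + d *\<^sub>R B2))"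
proof -
  define C where "C = cross4 T (a *\<^sub>R B1 + b *\<^sub>R B2) (c *\<^sub>R B1 + d *\<^sub>R B2)"
  have 0: "C \<bullet> T = 0" unfolding C_def by (rule cross4_orth1)
  have "C \<bullet> (a *\<^sub>R B1 + b *\<^sub>R B2) = 0" unfolding C_def by (rule cross4_orth2)
  hence 2: "a * (C \<bullet> B1) + b * (C \<bullet> B2) = 0" by (simp add: inner_add_right)
  have "C \<bullet> (c *\<^sub>R B1 + d *\<^sub>R B2) = 0" unfolding C_def by (rule cross4_orth3)
  hence 3: "c * (C \<bullet> B1) + d * (C \<bullet> B2) = 0" by (simp add: inner_add_right)
  have "(C \<bullet> B1) * (a * d - b * c) = d * (a * (C \<bullet> B1) + b * (C \<bullet> B2)) - b * (c * (C \<bullet> B1) + d * (C \<bullet> B2))"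
    by (simp add: algebra_simps)
  hence 4: "C \<bullet> B1 = 0" using 2 3 assms(11) by simp
  have "(C \<bullet> B2) * (a * d - b * c) = a * (c * (C \<bullet> B1) + d * (C \<bullet> B2)) - c * (a * (C \<bullet> B1) + b * (C \<bullet> B2))"
    by (simp add: algebra_simps)
  hence 5: "C \<bullet> B2 = 0" using 2 3 assms(11) by simp
  have "C = (C \<bullet> N) *\<^sub>R N" by (rule orth_expand[OF assms(1-10) 0 4 5])
  thus ?thesis unfolding parallel_def C_def by blast
qed

theorem mainTheorem4:
  fixes r T N B1 B2 :: "real \<Rightarrow> real^4"
    and k1 k2 k3 U V W X :: "real \<Rightarrow> real"
    and l m n p :: "real \<Rightarrow> real \<Rightarrow> real"
    and L1 L2 T1 T2 Q1 Q2 t0 q0 :: real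
  assumes "L1 < L2" and "T1 < T2" and "Q1 < Q2"
    and "t0 \<in> {T1..T2}" and "q0 \<in> {Q1..Q2}"
    and "frenet4 L1 L2 r T N B1 B2 k1 k2 k3"
    and "C1_on ({L1..L2} \<times> {Q1..Q2}) (\<lambda>(s, q). l s q)"
    and "C1_on ({L1..L2} \<times> {Q1..Q2}) (\<lambda>(s, q). m s q)"
    and "C1_on ({L1..L2} \<times> {Q1..Q2}) (\<lambda>(s, q). n s q)"
    and "C1_on ({L1..L2} \<times> {Q1..Q2}) (\<lambda>(s, q). p s q)"
    and "C1_on {T1..T2} U" and "C1_on {T1..T2} V"
    and "C1_on {T1..T2} W" and "C1_on {T1..T2} X"
    and "U t0 = 0" and "vector_derivative U (at t0 within {T1..T2}) = 0"
    and "V t0 = 0" and "vector_derivative V (at t0 within {T1..T2}) = 0"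
  shows "isogeodesic L1 L2 T1 T2 Q1 Q2 r N
           (\<lambda>s t q. r s + (l s q * U t) *\<^sub>R T s + (m s q * V t) *\<^sub>R N s
                      + (n s q * W t) *\<^sub>R B1 s + (p s q * X t) *\<^sub>R B2 s) t0 q0
         \<longleftrightarrow>
         (\<forall>s\<in>{L1..L2}.
            n s q0 * W t0 = 0 \<and> p s q0 * X t0 = 0 \<and>
            n s q0 * vector_derivative W (at t0 within {T1..T2})
              * vector_derivative (\<lambda>q. p s q) (at q0 within {Q1..Q2}) * X t0
            - vector_derivative (\<lambda>q. n s q) (at q0 within {Q1..Q2}) * W t0 * p s q0
              * vector_derivative X (at t0 within {T1..T2}) \<noteq> 0)"
proof -
  let ?I = "{L1..L2}" and ?J = "{T1..T2}" and ?K = "{Q1..Q2}"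
  define P where "P = (\<lambda>s t q. r s + (l s q * U t) *\<^sub>R T s + (m s q * V t) *\<^sub>R N s
                      + (n s q * W t) *\<^sub>R B1 s + (p s q * X t) *\<^sub>R B2 s)"
  define W' where "W' = vector_derivative W (at t0 within ?J)"
  define X' where "X' = vector_derivative X (at t0 within ?J)"
  define U' where "U' = vector_derivative U (at t0 within ?J)"
  define V' where "V' = vector_derivative V (at t0 within ?J)"
  define lq where "lq = (\<lambda>s. vector_derivative (\<lambda>q. l s q) (at q0 within ?K))"
  define mq where "mq = (\<lambda>s. vector_derivative (\<lambda>q. m s q) (at q0 within ?K))"
  define nq where "nq = (\<lambda>s. vector_derivative (\<lambda>q. n s q) (at q0 within ?K))"
  define pq where "pq = (\<lambda>s. vector_derivative (\<lambda>q. p s q) (at q0 within ?K))"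
  have fr: "\<And>s. s \<in> ?I \<Longrightarrow>
        T s \<bullet> T s = 1 \<and> N s \<bullet> N s = 1 \<and> B1 s \<bullet> B1 s = 1 \<and> B2 s \<bullet> B2 s = 1 \<and>
        T s \<bullet> N s = 0 \<and> T s \<bullet> B1 s = 0 \<and> T s \<bullet> B2 s = 0 \<and>
        N s \<bullet> B1 s = 0 \<and> N s \<bullet> B2 s = 0 \<and> B1 s \<bullet> B2 s = 0 \<and>
        (r has_vector_derivative T s) (at s within ?I)"
    using assms(6) unfolding frenet4_def by blast
  have U0: "U' = 0" "V' = 0" using assms(16,18) unfolding U'_def V'_def by auto
  have Pt: "vector_derivative (\<lambda>\<tau>. P s \<tau> q0) (at t0 within ?J)
      = (n s q0 * W') *\<^sub>R B1 s + (p s q0 * X') *\<^sub>R B2 s" for s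
  proof -
    have "((\<lambda>\<tau>. P s \<tau> q0) has_vector_derivative
       (0 + (l s q0 * U') *\<^sub>R T s + (m s q0 * V') *\<^sub>R N s + (n s q0 * W') *\<^sub>R B1 s + (p s q0 * X') *\<^sub>R B2 s))
       (at t0 within ?J)"
      unfolding P_def U'_def V'_def W'_def X'_def
      by (intro has_vector_derivative_add has_vector_derivative_const hvd_lin1 C1_vd assms(4,11-14))
    thus ?thesis using vector_derivative_within_closed_interval[OF assms(2,4)] U0 by simp
  qed
  have Pq: "vector_derivative (\<lambda>\<rho>. P s t0 \<rho>) (at q0 within ?K)
      = (nq s * W t0) *\<^sub>R B1 s + (pq s * X t0) *\<^sub>R B2 s" if s: "s \<in> ?I" for s
  proof -
    have "((\<lambda>\<rho>. P s t0 \<rho>) has_vector_derivative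
       (0 + (lq s * U t0) *\<^sub>R T s + (mq s * V t0) *\<^sub>R N s + (nq s * W t0) *\<^sub>R B1 s + (pq s * X t0) *\<^sub>R B2 s))
       (at q0 within ?K)"
      unfolding P_def lq_def mq_def nq_def pq_def
      by (intro has_vector_derivative_add has_vector_derivative_const hvd_lin2 C1_partial[OF _ s] assms(5,7-10))
    thus ?thesis using vector_derivative_within_closed_interval[OF assms(3,5)] assms(15,17) by simp
  qed
  have iso: "isogeodesic L1 L2 T1 T2 Q1 Q2 r N P t0 q0 \<longleftrightarrow>
     (\<forall>s\<in>?I. P s t0 q0 = r s \<and>
        lin_indep3 (vector_derivative (\<lambda>\<sigma>. P \<sigma> t0 q0) (at s within ?I))
           ((n s q0 * W') *\<^sub>R B1 s + (p s q0 * X') *\<^sub>R B2 s) ((nq s * W t0) *\<^sub>R B1 s + (pq s * X t0) *\<^sub>R B2 s) \<and>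
        parallel (N s) (cross4 (vector_derivative (\<lambda>\<sigma>. P \<sigma> t0 q0) (at s within ?I))
           ((n s q0 * W') *\<^sub>R B1 s + (p s q0 * X') *\<^sub>R B2 s) ((nq s * W t0) *\<^sub>R B1 s + (pq s * X t0) *\<^sub>R B2 s)))"
    unfolding isogeodesic_def Let_def using Pt Pq by simp
  have key: "\<And>s. n s q0 * W' * pq s * X t0 - nq s * W t0 * p s q0 * X'
      = (n s q0 * W') * (pq s * X t0) - (p s q0 * X') * (nq s * W t0)"
    by (simp add: algebra_simps)
  have Pr: "P s t0 q0 = r s + (n s q0 * W t0) *\<^sub>R B1 s + (p s q0 * X t0) *\<^sub>R B2 s" for s
    unfolding P_def using assms(15,17) by simp
  have main: "isogeodesic L1 L2 T1 T2 Q1 Q2 r N P t0 q0 \<longleftrightarrow> (\<forall>s\<in>?I. n s q0 * W t0 = 0 \<and> p s q0 * X t0 = 0 \<and>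
        n s q0 * W' * pq s * X t0 - nq s * W t0 * p s q0 * X' \<noteq> 0)"
    unfolding iso key
  proof
    assume H: "\<forall>s\<in>?I. P s t0 q0 = r s \<and>
        lin_indep3 (vector_derivative (\<lambda>\<sigma>. P \<sigma> t0 q0) (at s within ?I))
           ((n s q0 * W') *\<^sub>R B1 s + (p s q0 * X') *\<^sub>R B2 s) ((nq s * W t0) *\<^sub>R B1 s + (pq s * X t0) *\<^sub>R B2 s) \<and>
        parallel (N s) (cross4 (vector_derivative (\<lambda>\<sigma>. P \<sigma> t0 q0) (at s within ?I))
           ((n s q0 * W') *\<^sub>R B1 s + (p s q0 * X') *\<^sub>R B2 s) ((nq s * W t0) *\<^sub>R B1 s + (pq s * X t0) *\<^sub>R B2 s))"
    show "\<forall>s\<in>?I. n s q0 * W t0 = 0 \<and> p s q0 * X t0 = 0 \<and>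
        n s q0 * W' * (pq s * X t0) - p s q0 * X' * (nq s * W t0) \<noteq> 0"
    proof
      fix s assume s: "s \<in> ?I"
      note f = fr[OF s]
      have e: "(n s q0 * W t0) *\<^sub>R B1 s + (p s q0 * X t0) *\<^sub>R B2 s = 0"
        using H s Pr[of s] by (simp add: add.assoc)
      have "B1 s \<bullet> ((n s q0 * W t0) *\<^sub>R B1 s + (p s q0 * X t0) *\<^sub>R B2 s) = 0" using e by simp
      hence 1: "n s q0 * W t0 = 0" using f by (simp add: inner_add_right)
      have "B2 s \<bullet> ((n s q0 * W t0) *\<^sub>R B1 s + (p s q0 * X t0) *\<^sub>R B2 s) = 0" using e by simp
      hence 2: "p s q0 * X t0 = 0" using f by (simp add: inner_add_right inner_commute)
      have 3: "n s q0 * W' * (pq s * X t0) - p s q0 * X' * (nq s * W t0) \<noteq> 0"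
        using H s dep3 by (metis (no_types, lifting) mult.assoc)
      show "n s q0 * W t0 = 0 \<and> p s q0 * X t0 = 0 \<and>
        n s q0 * W' * (pq s * X t0) - p s q0 * X' * (nq s * W t0) \<noteq> 0" using 1 2 3 by blast
    qed
  next
    assume H: "\<forall>s\<in>?I. n s q0 * W t0 = 0 \<and> p s q0 * X t0 = 0 \<and>
        n s q0 * W' * (pq s * X t0) - p s q0 * X' * (nq s * W t0) \<noteq> 0"
    have Pr': "P s t0 q0 = r s" if s: "s \<in> ?I" for s
    proof -
      have z: "n s q0 * W t0 = 0" "p s q0 * X t0 = 0" using H s by auto
      show ?thesis unfolding Pr[of s] z by simp
    qed
    show "\<forall>s\<in>?I. P s t0 q0 = r s \<and>
        lin_indep3 (vector_derivative (\<lambda>\<sigma>. P \<sigma> t0 q0) (at s within ?I))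
           ((n s q0 * W') *\<^sub>R B1 s + (p s q0 * X') *\<^sub>R B2 s) ((nq s * W t0) *\<^sub>R B1 s + (pq s * X t0) *\<^sub>R B2 s) \<and>
        parallel (N s) (cross4 (vector_derivative (\<lambda>\<sigma>. P \<sigma> t0 q0) (at s within ?I))
           ((n s q0 * W') *\<^sub>R B1 s + (p s q0 * X') *\<^sub>R B2 s) ((nq s * W t0) *\<^sub>R B1 s + (pq s * X t0) *\<^sub>R B2 s))"
    proof
      fix s assume s: "s \<in> ?I"
      note f = fr[OF s]
      have "((\<lambda>\<sigma>. P \<sigma> t0 q0) has_vector_derivative T s) (at s within ?I)"
        by (rule has_vector_derivative_transform[OF s _ conjunct2[OF conjunct2[OF conjunct2[OF conjunct2[OF conjunct2[OF conjunct2[OF conjunct2[OF conjunct2[OF conjunct2[OF conjunct2[OF f]]]]]]]]]]]) (rule Pr')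
      hence Ps: "vector_derivative (\<lambda>\<sigma>. P \<sigma> t0 q0) (at s within ?I) = T s"
        by (rule vector_derivative_within_closed_interval[OF assms(1) s])
      have dt: "(n s q0 * W') * (pq s * X t0) - (p s q0 * X') * (nq s * W t0) \<noteq> 0"
        using H s by simp
      show "P s t0 q0 = r s \<and>
        lin_indep3 (vector_derivative (\<lambda>\<sigma>. P \<sigma> t0 q0) (at s within ?I))
           ((n s q0 * W') *\<^sub>R B1 s + (p s q0 * X') *\<^sub>R B2 s) ((nq s * W t0) *\<^sub>R B1 s + (pq s * X t0) *\<^sub>R B2 s) \<and>
        parallel (N s) (cross4 (vector_derivative (\<lambda>\<sigma>. P \<sigma> t0 q0) (at s within ?I))
           ((n s q0 * W') *\<^sub>R B1 s + (p s q0 * X') *\<^sub>R B2 s) ((nq s * W t0) *\<^sub>R B1 s + (pq s * X t0) *\<^sub>R B2 s))"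
        unfolding Ps using Pr'[OF s] indep3[of "T s" "B1 s" "B2 s", OF _ _ _ _ _ _ dt]
           par3[of "T s" "N s" "B1 s" "B2 s", OF _ _ _ _ _ _ _ _ _ _ dt] f by simp
    qed
  qed
  show ?thesis using main unfolding P_def W'_def X'_def nq_def pq_def .
qed

end
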